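(* Let $G'(L'\cup R',E')$ be a bipartite graph with $|L'|=|R'|=N$ in which every vertex has degree at least $2N/3$. Then for any edge $e\in E'$, the probability that $e$ belongs to a perfect matching of $G'$ chosen uniformly at random is at most $3/N$. *)

theory Defs
  imports Complex_Main
begin

text \<open>A bipartite graph with left part L, right part R (disjoint, since of different types)
  and edge set E, a subset of L \<times> R.\<close>

definition bipartite_graph :: "'a set \<Rightarrow> 'b set \<Rightarrow> ('a \<times> 'b) set \<Rightarrow> bool" where
  "bipartite_graph L R E \<longleftrightarrow> finite L \<and> finite R \<and> E \<subseteq> L \<times> R"

definition deg_left :: "('a \<times> 'b) set \<Rightarrow> 'a \<Rightarrow> nat" where
  "deg_left E l = card {r. (l, r) \<in> E}"

definition deg_right :: "('a \<times> 'b) set \<Rightarrow> 'b \<Rightarrow> nat" where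
  "deg_right E r = card {l. (l, r) \<in> E}"

definition perfect_matchings :: "'a set \<Rightarrow> 'b set \<Rightarrow> ('a \<times> 'b) set \<Rightarrow> ('a \<times> 'b) set set" where
  "perfect_matchings L R E =
     {M. M \<subseteq> E \<and> (\<forall>l\<in>L. \<exists>!r. (l, r) \<in> M) \<and> (\<forall>r\<in>R. \<exists>!l. (l, r) \<in> M)}"

definition prob_edge_in_random_pm :: "'a set \<Rightarrow> 'b set \<Rightarrow> ('a \<times> 'b) set \<Rightarrow> ('a \<times> 'b) \<Rightarrow> real" where
  "prob_edge_in_random_pm L R E e =
     real (card {M \<in> perfect_matchings L R E. e \<in> M}) / real (card (perfect_matchings L R E))"

end

theory Submission
  imports Defs
begin

lemma pm_ul:
  assumes "bipartite_graph L R E" "M \<in> perfect_matchings L R E" "(a,b)\<in>M" "(a,b')\<in>M"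
  shows "b = b'"
proof -
  have "a \<in> L" using assms unfolding bipartite_graph_def perfect_matchings_def by blast
  then show ?thesis using assms unfolding perfect_matchings_def by blast
qed

lemma pm_ur:
  assumes "bipartite_graph L R E" "M \<in> perfect_matchings L R E" "(a,b)\<in>M" "(a',b)\<in>M"
  shows "a = a'"
proof -
  have "b \<in> R" using assms unfolding bipartite_graph_def perfect_matchings_def by blast
  then show ?thesis using assms unfolding perfect_matchings_def by blast
qed

definition swp :: "'a \<Rightarrow> 'b \<Rightarrow> ('a \<times> 'b) set \<Rightarrow> ('a \<times> 'b) \<Rightarrow> ('a \<times> 'b) set" where
  "swp u v M p = M - {(u,v), p} \<union> {(u, snd p), (fst p, v)}"

lemma swap_pm:
  assumes G: "bipartite_graph L R E" and M: "M \<in> perfect_matchings L R E"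
    and uv: "(u,v)\<in>M" and ab: "(a,b)\<in>M" and au: "a \<noteq> u" and ub: "(u,b)\<in>E" and av: "(a,v)\<in>E"
  shows "swp u v M (a,b) \<in> perfect_matchings L R E" "(u,v) \<notin> swp u v M (a,b)"
proof -
  have bv: "b \<noteq> v" using pm_ur[OF G M uv] ab au by blast
  have ME: "M \<subseteq> E" using M unfolding perfect_matchings_def by blast
  have U1: "\<And>x y y'. (x,y)\<in>M \<Longrightarrow> (x,y')\<in>M \<Longrightarrow> y = y'" using pm_ul[OF G M] by blast
  have U2: "\<And>x x' y. (x,y)\<in>M \<Longrightarrow> (x',y)\<in>M \<Longrightarrow> x = x'" using pm_ur[OF G M] by blast
  let ?M = "swp u v M (a,b)"
  have sub: "?M \<subseteq> E" using ME ub av unfolding swp_def by auto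
  have lft: "\<forall>l\<in>L. \<exists>!r. (l,r) \<in> ?M"
  proof
    fix l assume l: "l \<in> L"
    then obtain r where r: "(l,r)\<in>M" using M unfolding perfect_matchings_def by blast
    show "\<exists>!r. (l,r) \<in> ?M"
    proof (cases "l = u")
      case True
      show ?thesis
        apply (rule ex1I[of _ b])
        using True au unfolding swp_def apply simp
        using True au bv uv U1 unfolding swp_def by auto
    next
      case F: False
      show ?thesis
      proof (cases "l = a")
        case True
        show ?thesis
          apply (rule ex1I[of _ v])
          using True au unfolding swp_def apply simp
          using True au bv ab U1 unfolding swp_def by auto
      next
        case False
        show ?thesis
          apply (rule ex1I[of _ r])
          using False F r unfolding swp_def apply simp
          using False F r U1 unfolding swp_def by auto
      qed
    qed
  qed
  have rgt: "\<forall>r\<in>R. \<exists>!l. (l,r) \<in> ?M"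
  proof
    fix r assume r: "r \<in> R"
    then obtain l where l: "(l,r)\<in>M" using M unfolding perfect_matchings_def by blast
    show "\<exists>!l. (l,r) \<in> ?M"
    proof (cases "r = v")
      case True
      show ?thesis
        apply (rule ex1I[of _ a])
        using True bv unfolding swp_def apply simp
        using True au bv uv U2 unfolding swp_def by auto
    next
      case F: False
      show ?thesis
      proof (cases "r = b")
        case True
        show ?thesis
          apply (rule ex1I[of _ u])
          using True bv unfolding swp_def apply simp
          using True au bv ab U2 unfolding swp_def by auto
      next
        case False
        show ?thesis
          apply (rule ex1I[of _ l])
          using False F l unfolding swp_def apply simp
          using False F l U2 unfolding swp_def by auto
      qed
    qed
  qed
  show "?M \<in> perfect_matchings L R E" using sub lft rgt unfolding perfect_matchings_def by blast
  show "(u,v) \<notin> ?M" using au bv unfolding swp_def by auto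
qed

lemma swap_recover:
  assumes G: "bipartite_graph L R E" and M: "M \<in> perfect_matchings L R E"
    and uv: "(u,v)\<in>M" and ab: "(a,b)\<in>M" and au: "a \<noteq> u"
  shows "M = swp u v M (a,b) - {(u,b),(a,v)} \<union> {(u,v),(a,b)}"
proof -
  have bv: "b \<noteq> v" using pm_ur[OF G M uv] ab au by blast
  have n1: "(u,b) \<notin> M" using pm_ul[OF G M uv] bv by blast
  have n2: "(a,v) \<notin> M" using pm_ur[OF G M uv] au by blast
  show ?thesis using uv ab n1 n2 au bv unfolding swp_def by auto
qed

lemma swap_inj:
  assumes G: "bipartite_graph L R E"
    and M1: "M1 \<in> perfect_matchings L R E" and uv1: "(u,v)\<in>M1" and ab1: "(a1,b1)\<in>M1"
    and au1: "a1 \<noteq> u" and ub1: "(u,b1)\<in>E" and av1: "(a1,v)\<in>E"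
    and M2: "M2 \<in> perfect_matchings L R E" and uv2: "(u,v)\<in>M2" and ab2: "(a2,b2)\<in>M2"
    and au2: "a2 \<noteq> u" and ub2: "(u,b2)\<in>E" and av2: "(a2,v)\<in>E"
    and eq: "swp u v M1 (a1,b1) = swp u v M2 (a2,b2)"
  shows "M1 = M2 \<and> (a1,b1) = (a2,b2)"
proof -
  have P: "swp u v M1 (a1,b1) \<in> perfect_matchings L R E"
    using swap_pm[OF G M1 uv1 ab1 au1 ub1 av1] by blast
  have "(a1,v) \<in> swp u v M1 (a1,b1)" "(a2,v) \<in> swp u v M1 (a1,b1)"
    using eq unfolding swp_def by auto
  hence a: "a1 = a2" using pm_ur[OF G P] by blast
  have "(u,b1) \<in> swp u v M1 (a1,b1)" "(u,b2) \<in> swp u v M1 (a1,b1)"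
    using eq unfolding swp_def by auto
  hence b: "b1 = b2" using pm_ul[OF G P] by blast
  have "M1 = M2"
    using swap_recover[OF G M1 uv1 ab1 au1] swap_recover[OF G M2 uv2 ab2 au2] eq a b by simp
  thus ?thesis using a b by simp
qed

lemma pm_card:
  assumes G: "bipartite_graph L R E" and M: "M \<in> perfect_matchings L R E"
  shows "bij_betw fst M L" "bij_betw snd M R"
proof -
  have MLR: "M \<subseteq> L \<times> R" using G M unfolding bipartite_graph_def perfect_matchings_def by blast
  show "bij_betw fst M L" unfolding bij_betw_def
  proof
    show "inj_on fst M" using pm_ul[OF G M] by (auto simp: inj_on_def)
    show "fst ` M = L" using MLR M unfolding perfect_matchings_def by force
  qed
  show "bij_betw snd M R" unfolding bij_betw_def
  proof
    show "inj_on snd M" using pm_ur[OF G M] by (auto simp: inj_on_def)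
    show "snd ` M = R" using MLR M unfolding perfect_matchings_def by force
  qed
qed


lemma T_bound:
  assumes G: "bipartite_graph L R E" and M: "M \<in> perfect_matchings L R E"
    and uv: "(u,v)\<in>M" and cL: "card L = N"
  shows "real (card {p\<in>M. fst p \<noteq> u \<and> (fst p, v)\<in>E \<and> (u, snd p)\<in>E})
          \<ge> real (deg_right E v) + real (deg_left E u) - 1 - real N"
proof -
  have fL: "finite L" "finite R" and ER: "E \<subseteq> L \<times> R" using G unfolding bipartite_graph_def by auto
  have ME: "M \<subseteq> E" using M unfolding perfect_matchings_def by blast
  have bf: "bij_betw fst M L" and bs: "bij_betw snd M R" using pm_card[OF G M] by auto
  have fM: "finite M" using bf fL bij_betw_finite by blast
  have cM: "card M = N" using bij_betw_same_card[OF bf] cL by simp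
  define M0 where "M0 = M - {(u,v)}"
  have "card M > 0" using fM uv card_gt_0_iff by blast
  hence N1: "N \<ge> 1" using cM by simp
  have "card M0 = N - 1" using cM uv fM unfolding M0_def by (simp add: card_Diff_singleton)
  hence cM0: "real (card M0) = real N - 1" using N1 by (simp add: of_nat_diff)
  have fst0: "\<And>p. p \<in> M0 \<Longrightarrow> fst p \<noteq> u" using pm_ul[OF G M] uv unfolding M0_def
    by (metis DiffD1 DiffD2 prod.collapse singletonI)
  have snd0: "\<And>p. p \<in> M0 \<Longrightarrow> snd p \<noteq> v" using pm_ur[OF G M] uv unfolding M0_def
    by (metis DiffD1 DiffD2 prod.collapse singletonI)
  define X where "X = {p\<in>M0. (fst p, v)\<in>E}"
  define Y where "Y = {p\<in>M0. (u, snd p)\<in>E}"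
  have "bij_betw fst X ({a. (a,v)\<in>E} - {u})" unfolding bij_betw_def
  proof
    have "X \<subseteq> M" unfolding X_def M0_def by auto
    thus "inj_on fst X" using bf unfolding bij_betw_def by (blast intro: inj_on_subset)
    show "fst ` X = {a. (a,v)\<in>E} - {u}"
    proof
      show "fst ` X \<subseteq> {a. (a,v)\<in>E} - {u}" using fst0 unfolding X_def by auto
      show "{a. (a,v)\<in>E} - {u} \<subseteq> fst ` X"
      proof
        fix a assume a: "a \<in> {a. (a,v)\<in>E} - {u}"
        hence "a \<in> L" using ER by auto
        hence "a \<in> fst ` M" using bf unfolding bij_betw_def by simp
        then obtain r where "(a,r)\<in>M" by force
        thus "a \<in> fst ` X" using a unfolding X_def M0_def by force
      qed
    qed
  qed
  hence cX: "card X = card ({a. (a,v)\<in>E} - {u})" by (rule bij_betw_same_card)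
  have "{a. (a,v)\<in>E} \<subseteq> L" using ER by auto
  hence "finite {a. (a,v)\<in>E}" using fL finite_subset by blast
  moreover have "u \<in> {a. (a,v)\<in>E}" using uv ME by auto
  ultimately have "card X = deg_right E v - 1" "deg_right E v \<ge> 1"
    unfolding deg_right_def cX by (auto simp: card_Diff_singleton Suc_le_eq card_gt_0_iff)
  hence cX': "real (card X) = real (deg_right E v) - 1" by (simp add: of_nat_diff)
  have "bij_betw snd Y ({b. (u,b)\<in>E} - {v})" unfolding bij_betw_def
  proof
    have "Y \<subseteq> M" unfolding Y_def M0_def by auto
    thus "inj_on snd Y" using bs unfolding bij_betw_def by (blast intro: inj_on_subset)
    show "snd ` Y = {b. (u,b)\<in>E} - {v}"
    proof
      show "snd ` Y \<subseteq> {b. (u,b)\<in>E} - {v}" using snd0 unfolding Y_def by auto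
      show "{b. (u,b)\<in>E} - {v} \<subseteq> snd ` Y"
      proof
        fix b assume b: "b \<in> {b. (u,b)\<in>E} - {v}"
        hence "b \<in> R" using ER by auto
        hence "b \<in> snd ` M" using bs unfolding bij_betw_def by simp
        then obtain l where "(l,b)\<in>M" by force
        thus "b \<in> snd ` Y" using b unfolding Y_def M0_def by force
      qed
    qed
  qed
  hence cY: "card Y = card ({b. (u,b)\<in>E} - {v})" by (rule bij_betw_same_card)
  have "{b. (u,b)\<in>E} \<subseteq> R" using ER by auto
  hence "finite {b. (u,b)\<in>E}" using fL finite_subset by blast
  moreover have "v \<in> {b. (u,b)\<in>E}" using uv ME by auto
  ultimately have "card Y = deg_left E u - 1" "deg_left E u \<ge> 1"
    unfolding deg_left_def cY by (auto simp: card_Diff_singleton Suc_le_eq card_gt_0_iff)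
  hence cY': "real (card Y) = real (deg_left E u) - 1" by (simp add: of_nat_diff)
  have fM0: "finite M0" using fM unfolding M0_def by simp
  have fX: "finite X" "finite Y" using fM0 unfolding X_def Y_def by auto
  have "card (X \<union> Y) + card (X \<inter> Y) = card X + card Y" using card_Un_Int[OF fX] by simp
  hence r1: "real (card (X \<union> Y)) + real (card (X \<inter> Y)) = real (card X) + real (card Y)"
    by (metis of_nat_add)
  have "card (X \<union> Y) \<le> card M0" using fM0 by (intro card_mono) (auto simp: X_def Y_def)
  hence r2: "real (card (X \<union> Y)) \<le> real (card M0)" by simp
  have "X \<inter> Y = {p\<in>M. fst p \<noteq> u \<and> (fst p, v)\<in>E \<and> (u, snd p)\<in>E}"
    using fst0 unfolding X_def Y_def M0_def by auto
  hence "card (X \<inter> Y) = card {p\<in>M. fst p \<noteq> u \<and> (fst p, v)\<in>E \<and> (u, snd p)\<in>E}" by simp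
  thus ?thesis using r2 cM0 cX' cY' r1 by linarith
qed


theorem mainTheorem13:
  fixes L :: "'a set" and R :: "'b set" and E :: "('a \<times> 'b) set" and N :: nat
    and e :: "'a \<times> 'b"
  assumes "bipartite_graph L R E"
    and "card L = N" and "card R = N"
    and "\<forall>l\<in>L. real (deg_left E l) \<ge> 2 * real N / 3"
    and "\<forall>r\<in>R. real (deg_right E r) \<ge> 2 * real N / 3"
    and "e \<in> E"
  shows "prob_edge_in_random_pm L R E e \<le> 3 / real N"
proof -
  note G = assms(1)
  obtain u v where e: "e = (u,v)" by (cases e)
  have fL: "finite L" "finite R" and ER: "E \<subseteq> L \<times> R" using G unfolding bipartite_graph_def by auto
  have uL: "u \<in> L" and vR: "v \<in> R" using assms(6) ER e by auto
  have Npos: "N > 0" using uL fL assms(2) card_gt_0_iff by blast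
  have dL: "real (deg_left E u) \<ge> 2 * real N / 3" using assms(4) uL by blast
  have dR: "real (deg_right E v) \<ge> 2 * real N / 3" using assms(5) vR by blast
  define PM where "PM = perfect_matchings L R E"
  have fE: "finite E" using ER fL finite_subset by blast
  have "PM \<subseteq> Pow E" unfolding PM_def perfect_matchings_def by auto
  hence fPM: "finite PM" using fE finite_subset by blast
  define A where "A = {M\<in>PM. e\<in>M}"
  define B where "B = PM - A"
  define T where "T = (\<lambda>M. {p\<in>M. fst p \<noteq> u \<and> (fst p, v)\<in>E \<and> (u, snd p)\<in>E})"
  define f where "f = (\<lambda>(M,p). swp u v M p)"
  have fA: "finite A" "finite B" using fPM unfolding A_def B_def by auto
  have fT: "\<forall>M\<in>A. finite (T M)"
  proof
    fix M assume "M \<in> A"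
    hence "M \<subseteq> E" unfolding A_def PM_def perfect_matchings_def by auto
    thus "finite (T M)" unfolding T_def using fE finite_subset by (metis (no_types, lifting) mem_Collect_eq subsetI)
  qed
  have inj: "inj_on f (Sigma A T)"
  proof (rule inj_onI)
    fix x y assume x: "x \<in> Sigma A T" and y: "y \<in> Sigma A T" and fxy: "f x = f y"
    obtain M1 a1 b1 where x': "x = (M1,(a1,b1))" by (metis prod.collapse)
    obtain M2 a2 b2 where y': "y = (M2,(a2,b2))" by (metis prod.collapse)
    have h1: "M1 \<in> perfect_matchings L R E" "(u,v)\<in>M1" "(a1,b1)\<in>M1" "a1 \<noteq> u" "(u,b1)\<in>E" "(a1,v)\<in>E"
      using x x' e unfolding A_def PM_def T_def by auto
    have h2: "M2 \<in> perfect_matchings L R E" "(u,v)\<in>M2" "(a2,b2)\<in>M2" "a2 \<noteq> u" "(u,b2)\<in>E" "(a2,v)\<in>E"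
      using y y' e unfolding A_def PM_def T_def by auto
    have "swp u v M1 (a1,b1) = swp u v M2 (a2,b2)" using fxy x' y' unfolding f_def by simp
    from swap_inj[OF G h1 h2 this] show "x = y" using x' y' by simp
  qed
  have img: "f ` Sigma A T \<subseteq> B"
  proof
    fix z assume "z \<in> f ` Sigma A T"
    then obtain M a b where x: "(M,(a,b)) \<in> Sigma A T" and z: "z = swp u v M (a,b)"
      unfolding f_def by auto
    have h1: "M \<in> perfect_matchings L R E" "(u,v)\<in>M" "(a,b)\<in>M" "a \<noteq> u" "(u,b)\<in>E" "(a,v)\<in>E"
      using x e unfolding A_def PM_def T_def by auto
    show "z \<in> B" using swap_pm[OF G h1] z e unfolding B_def A_def PM_def by auto
  qed
  have c1: "card (Sigma A T) \<le> card B" using card_inj_on_le[OF inj img fA(2)] .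
  have c2: "card (Sigma A T) = (\<Sum>M\<in>A. card (T M))" using card_SigmaI[OF fA(1) fT] by simp
  have lb: "\<forall>M\<in>A. real (card (T M)) \<ge> real N / 3 - 1"
  proof
    fix M assume "M \<in> A"
    hence "M \<in> perfect_matchings L R E" "(u,v) \<in> M" unfolding A_def PM_def e by auto
    from T_bound[OF G this assms(2)] show "real (card (T M)) \<ge> real N / 3 - 1"
      using dL dR unfolding T_def by linarith
  qed
  have "real (card A) * (real N / 3 - 1) \<le> (\<Sum>M\<in>A. real (card (T M)))"
    using sum_mono[of A "\<lambda>_. real N / 3 - 1" "\<lambda>M. real (card (T M))"] lb by simp
  also have "\<dots> = real (card (Sigma A T))" using c2 by simp
  also have "\<dots> \<le> real (card B)" using c1 by simp
  finally have k: "real (card A) * (real N / 3 - 1) \<le> real (card B)" .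
  have "card A + card B = card PM" unfolding B_def using fPM A_def
    by (metis (no_types, lifting) card_Diff_subset fA(1) le_add_diff_inverse mem_Collect_eq card_mono subsetI)
  hence k2: "real (card A) + real (card B) = real (card PM)" by (metis of_nat_add)
  have key: "real (card A) * real N \<le> 3 * real (card PM)" using k k2 by (simp add: algebra_simps)
  have pe: "prob_edge_in_random_pm L R E e = real (card A) / real (card PM)"
    unfolding prob_edge_in_random_pm_def A_def PM_def by simp
  show ?thesis
  proof (cases "card PM = 0")
    case True thus ?thesis using pe Npos by simp
  next
    case False
    hence "real (card PM) > 0" by simp
    hence "real (card A) / real (card PM) \<le> 3 / real N" using Npos key
      by (simp add: divide_simps mult.commute)
    thus ?thesis using pe by simp
  qed
qed

end
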